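(* Let $(V,\{A,B\})$ be a forking problem with a monotonic profile. The assignments returned by $R_A$ and $R_B$ (described in the context) coincide if and only if the profile admits a unique stable assignment.
   Context: Agents $V=\{v_1,\dots,v_n\}$; two alternatives $A,B$. Each agent $v_i$ has a strict total order $\succ_i$ on $\{A,B\}\times\{1,\dots,n\}$, where $(S,j)$ means being in the community adopting $S$ of size $j$; it is monotonic if $(S,j)\succ_i(S,k)$ whenever $k<j$. An assignment is a map $f:V\to\{A,B\}$; $v_i$ prefers $f$ to $g$ if $(f(v_i),|f^{-1}(f(v_i))|)\succ_i(g(v_i),|g^{-1}(g(v_i))|)$. An assignment $f$ is stable if there is no assignment $f'\neq f$ such that every agent $v_i$ with $f'(v_i)\neq f(v_i)$ prefers $f'$ to $f$. Algorithm $R_A$: set $V_A=V$, $V_B=\emptyset$, $a=|V_A|$, $b=|V_B|$. Repeat: let $k$ be the largest $j\in\{1,\dots,a\}$ with $|\{v_i\in V_A:(B,b+j)\succ_i(A,a)\}|\ge j$, or $k=0$ if none exists. If $k=0$, output $f$ with $f^{-1}(A)=V_A$, $f^{-1}(B)=V_B$. Otherwise let $X=\{v_i\in V_A:(B,b+k)\succ_i(A,a)\}$, move $X$ from $V_A$ to $V_B$, update $a,b$, and repeat. Algorithm $R_B$ is the same with the roles of $A$ and $B$ exchanged (it starts with all agents at $B$ and moves groups to $A$). *)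

theory Defs
  imports Main "HOL-Library.While_Combinator"
begin

text \<open>The set of agents V is the
universe of a finite type 'v, so n = card (UNIV :: 'v set). A profile assigns to every
agent v a relation pref v, where ((S,j),(T,k)) in pref v means
(S,j) is strictly preferred to (T,k) by v.\<close>

datatype alt = A | B

fun other :: "alt \<Rightarrow> alt" where
  "other A = B" | "other B = A"

type_synonym 'v profile = "'v \<Rightarrow> ((alt \<times> nat) \<times> (alt \<times> nat)) set"

definition outcomes :: "nat \<Rightarrow> (alt \<times> nat) set" where
  "outcomes n = UNIV \<times> {1..n}"

definition is_profile :: "'v::finite profile \<Rightarrow> bool" where
  "is_profile pref \<longleftrightarrow>
     (\<forall>v. strict_linear_order_on (outcomes (card (UNIV :: 'v set))) (pref v)
          \<and> pref v \<subseteq> outcomes (card (UNIV :: 'v set)) \<times> outcomes (card (UNIV :: 'v set)))"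

definition monotonic :: "'v::finite profile \<Rightarrow> bool" where
  "monotonic pref \<longleftrightarrow>
     (\<forall>v S j k. 1 \<le> k \<and> k < j \<and> j \<le> card (UNIV :: 'v set) \<longrightarrow> ((S, j), (S, k)) \<in> pref v)"

definition comm_size :: "('v \<Rightarrow> alt) \<Rightarrow> 'v \<Rightarrow> nat" where
  "comm_size f v = card {u. f u = f v}"

definition prefers :: "'v profile \<Rightarrow> 'v \<Rightarrow> ('v \<Rightarrow> alt) \<Rightarrow> ('v \<Rightarrow> alt) \<Rightarrow> bool" where
  "prefers pref v f g \<longleftrightarrow> ((f v, comm_size f v), (g v, comm_size g v)) \<in> pref v"

definition stable :: "'v profile \<Rightarrow> ('v \<Rightarrow> alt) \<Rightarrow> bool" where
  "stable pref f \<longleftrightarrow>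
     \<not> (\<exists>f'. f' \<noteq> f \<and> (\<forall>v. f' v \<noteq> f v \<longrightarrow> prefers pref v f' f))"

text \<open>Algorithm R_S (S = A gives R_A, S = B gives R_B). The state is the set VS
of agents currently at S; the agents at other S are the rest. a = |VS|, b = n - a.\<close>

definition willing :: "'v::finite profile \<Rightarrow> alt \<Rightarrow> 'v set \<Rightarrow> nat \<Rightarrow> 'v set" where
  "willing pref S VS j =
     {v \<in> VS. ((other S, (card (UNIV :: 'v set) - card VS) + j), (S, card VS)) \<in> pref v}"

definition kval :: "'v::finite profile \<Rightarrow> alt \<Rightarrow> 'v set \<Rightarrow> nat" where
  "kval pref S VS =
     (if \<exists>j\<in>{1..card VS}. card (willing pref S VS j) \<ge> j
      then Max {j\<in>{1..card VS}. card (willing pref S VS j) \<ge> j}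
      else 0)"

definition R_step :: "'v::finite profile \<Rightarrow> alt \<Rightarrow> 'v set \<Rightarrow> 'v set" where
  "R_step pref S VS = VS - willing pref S VS (kval pref S VS)"

definition R_final :: "'v::finite profile \<Rightarrow> alt \<Rightarrow> 'v set" where
  "R_final pref S =
     the (while_option (\<lambda>VS. kval pref S VS \<noteq> 0) (R_step pref S) UNIV)"

definition R_alg :: "'v::finite profile \<Rightarrow> alt \<Rightarrow> ('v \<Rightarrow> alt)" where
  "R_alg pref S = (\<lambda>v. if v \<in> R_final pref S then S else other S)"

end

theory Submission
  imports Defs
begin

lemma other_ne[simp]: "other S \<noteq> S" by (cases S) auto
lemma other_ne2[simp]: "S \<noteq> other S" by (cases S) auto
lemma other_other[simp]: "other (other S) = S" by (cases S) auto
lemma alt_cases2: "x \<noteq> S \<Longrightarrow> x = other S" by (cases x; cases S) auto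
lemma other_eq_iff[simp]: "(x = other S) \<longleftrightarrow> x \<noteq> S" by (cases x; cases S) auto

context
  fixes pref :: "'v::finite profile"
  assumes prof: "is_profile pref" and mon: "monotonic pref"
begin


lemma pref_out: "(x, y) \<in> pref v \<Longrightarrow> snd x \<in> {1..card (UNIV :: 'v set)} \<and> snd y \<in> {1..card (UNIV :: 'v set)}"
  using prof unfolding is_profile_def outcomes_def by (cases x; cases y) force

lemma pref_trans: "(x, y) \<in> pref v \<Longrightarrow> (y, z) \<in> pref v \<Longrightarrow> (x, z) \<in> pref v"
  using prof unfolding is_profile_def strict_linear_order_on_def trans_def by blast

lemma pref_irrefl: "(x, x) \<notin> pref v"
  using prof unfolding is_profile_def strict_linear_order_on_def irrefl_def by blast

lemma up_left: "((S, k), y) \<in> pref v \<Longrightarrow> k \<le> j \<Longrightarrow> j \<le> card (UNIV :: 'v set) \<Longrightarrow> ((S, j), y) \<in> pref v"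
proof -
  assume h: "((S, k), y) \<in> pref v" "k \<le> j" "j \<le> card (UNIV :: 'v set)"
  show ?thesis
  proof (cases "k = j")
    case False
    have "1 \<le> k" using pref_out[OF h(1)] by simp
    hence "((S, j), (S, k)) \<in> pref v" using mon h False unfolding monotonic_def by simp
    thus ?thesis using h(1) pref_trans by blast
  qed (use h in simp)
qed

lemma down_right: "(x, (S, k)) \<in> pref v \<Longrightarrow> j \<le> k \<Longrightarrow> 1 \<le> j \<Longrightarrow> (x, (S, j)) \<in> pref v"
proof -
  assume h: "(x, (S, k)) \<in> pref v" "j \<le> k" "1 \<le> j"
  show ?thesis
  proof (cases "k = j")
    case False
    have "k \<le> card (UNIV :: 'v set)" using pref_out[OF h(1)] by simp
    hence "((S, k), (S, j)) \<in> pref v" using mon h False unfolding monotonic_def by simp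
    thus ?thesis using h(1) pref_trans by blast
  qed (use h in simp)
qed

lemma kval_props:
  assumes "kval pref S VS \<noteq> 0"
  shows "kval pref S VS \<in> {1..card VS} \<and> card (willing pref S VS (kval pref S VS)) \<ge> kval pref S VS"
proof -
  let ?M = "{j\<in>{1..card VS}. card (willing pref S VS j) \<ge> j}"
  have ex: "\<exists>j\<in>{1..card VS}. card (willing pref S VS j) \<ge> j"
    using assms unfolding kval_def by (auto split: if_splits)
  hence "?M \<noteq> {}" by auto
  hence "Max ?M \<in> ?M" by (intro Max_in) auto
  thus ?thesis using ex unfolding kval_def by simp
qed

lemma kval_nz:
  assumes "j \<in> {1..card VS}" "card (willing pref S VS j) \<ge> j"
  shows "kval pref S VS \<noteq> 0"
proof -
  let ?M = "{j\<in>{1..card VS}. card (willing pref S VS j) \<ge> j}"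
  have "j \<in> ?M" using assms by auto
  hence "j \<le> Max ?M" by (intro Max_ge) auto
  moreover have "kval pref S VS = Max ?M" unfolding kval_def using assms by auto
  moreover have "1 \<le> j" using assms(1) by simp
  ultimately show ?thesis by linarith
qed

lemma R_final_prop:
  assumes init: "P UNIV" and step: "\<And>VS. P VS \<Longrightarrow> kval pref S VS \<noteq> 0 \<Longrightarrow> P (R_step pref S VS)"
  shows "P (R_final pref S) \<and> kval pref S (R_final pref S) = 0"
proof -
  have dec: "card (R_step pref S s) < card s" if k: "kval pref S s \<noteq> 0" for s
  proof -
    let ?W = "willing pref S s (kval pref S s)"
    have "card ?W \<ge> 1" using kval_props[OF k] by auto
    hence "?W \<noteq> {}" by auto
    moreover have "?W \<subseteq> s" unfolding willing_def by auto
    ultimately have "s - ?W \<subset> s" by auto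
    hence "card (s - ?W) < card s" by (intro psubset_card_mono) auto
    thus ?thesis unfolding R_step_def by simp
  qed
  have wf: "wf {(t, s). (True \<and> kval pref S s \<noteq> 0) \<and> t = R_step pref S s}"
    by (rule wf_subset[OF wf_measure[of card]]) (auto simp: dec)
  obtain t where t: "while_option (\<lambda>VS. kval pref S VS \<noteq> 0) (R_step pref S) UNIV = Some t"
    using wf_while_option_Some[OF wf, of UNIV] by auto
  have "P t" by (rule while_option_rule[OF _ t]) (use step init in auto)
  moreover have "kval pref S t = 0" using while_option_stop[OF t] by simp
  ultimately show ?thesis using t unfolding R_final_def by simp
qed

lemma card_compl: "card (- (X :: 'v set)) = card (UNIV :: 'v set) - card X"
  by (metis Compl_eq_Diff_UNIV card_Diff_subset finite subset_UNIV)

lemma stable_sub_step: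
  assumes st: "stable pref g" and sub: "{v. g v = S} \<subseteq> VS" and k: "kval pref S VS \<noteq> 0"
  shows "{v. g v = S} \<subseteq> R_step pref S VS"
proof (rule ccontr)
  let ?n = "card (UNIV :: 'v set)"
  let ?k = "kval pref S VS"
  let ?W = "willing pref S VS ?k"
  let ?X = "{v. g v = S}"
  let ?Y = "?W \<inter> ?X"
  assume "\<not> ?X \<subseteq> R_step pref S VS"
  hence Yne: "?Y \<noteq> {}" using sub unfolding R_step_def by auto
  have kp: "?k \<in> {1..card VS}" "card ?W \<ge> ?k" using kval_props[OF k] by auto
  have WVS: "?W \<subseteq> VS" unfolding willing_def by auto
  have cW: "card ?W = card ?Y + card (?W - ?X)"
    by (metis Diff_Diff_Int card_Diff_subset_Int finite Int_commute Int_lower1 card_Diff_subset le_add_diff_inverse2 card_mono)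
  have "card (?W - ?X) \<le> card (VS - ?X)" using WVS by (intro card_mono) auto
  moreover have "card (VS - ?X) = card VS - card ?X" using sub by (simp add: card_Diff_subset)
  moreover have "card VS \<le> ?n" by (simp add: card_mono)
  moreover have "card ?X \<le> card VS" using sub by (simp add: card_mono)
  moreover have "card ?Y \<le> card ?X" by (simp add: card_mono)
  moreover have "card ?Y \<ge> 1" using Yne by (simp add: Suc_leI card_gt_0_iff)
  ultimately have ar: "?n - card VS + ?k \<le> ?n - card ?X + card ?Y" "?n - card ?X + card ?Y \<le> ?n"
    "card ?X \<le> card VS" "1 \<le> card ?X"
    using cW kp by linarith+
  define f' where "f' = (\<lambda>u. if u \<in> ?Y then other S else g u)"
  obtain y where y: "y \<in> ?Y" using Yne by auto
  have "f' y \<noteq> g y" using y unfolding f'_def by simp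
  hence "f' \<noteq> g" by auto
  moreover have "prefers pref v f' g" if v: "f' v \<noteq> g v" for v
  proof -
    have vY: "v \<in> ?Y" using v unfolding f'_def by (auto split: if_splits)
    have "{u. f' u = other S} = - ?X \<union> ?Y"
    proof (intro set_eqI iffI)
      fix u assume "u \<in> {u. f' u = other S}"
      thus "u \<in> - ?X \<union> ?Y" unfolding f'_def by (simp split: if_splits)
    next
      fix u assume "u \<in> - ?X \<union> ?Y"
      thus "u \<in> {u. f' u = other S}" unfolding f'_def by (simp split: if_splits; blast)
    qed
    hence "comm_size f' v = card (- ?X \<union> ?Y)" using vY unfolding comm_size_def f'_def by simp
    also have "\<dots> = card (- ?X) + card ?Y" by (rule card_Un_disjoint) auto
    also have "\<dots> = ?n - card ?X + card ?Y" by (simp add: card_compl)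
    finally have c1: "comm_size f' v = ?n - card ?X + card ?Y" .
    have c2: "comm_size g v = card ?X" using vY unfolding comm_size_def by simp
    have "((other S, ?n - card VS + ?k), (S, card VS)) \<in> pref v" using vY unfolding willing_def by simp
    hence "((other S, ?n - card ?X + card ?Y), (S, card VS)) \<in> pref v" by (rule up_left) (use ar in auto)
    hence "((other S, ?n - card ?X + card ?Y), (S, card ?X)) \<in> pref v" by (rule down_right) (use ar in auto)
    thus ?thesis unfolding prefers_def c1 c2 using vY unfolding f'_def by simp
  qed
  ultimately show False using st unfolding stable_def by blast
qed

lemma stable_sub_final:
  assumes st: "stable pref g"
  shows "{v. g v = S} \<subseteq> R_final pref S"
  using R_final_prop[where P = "\<lambda>VS. {v. g v = S} \<subseteq> VS"] stable_sub_step[OF st] by blast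

definition Inv :: "alt \<Rightarrow> 'v set \<Rightarrow> bool" where
  "Inv S VS \<longleftrightarrow> (\<forall>D. D \<subseteq> - VS \<longrightarrow> D \<noteq> {} \<longrightarrow> (\<exists>v\<in>D. \<exists>a0 b0. card VS + card D \<le> a0 \<and>
      b0 \<le> card (UNIV :: 'v set) - card VS \<and> ((other S, b0), (S, a0)) \<in> pref v))"

lemma Inv_step:
  assumes I: "Inv S VS" and k: "kval pref S VS \<noteq> 0"
  shows "Inv S (R_step pref S VS)"
  unfolding Inv_def
proof (intro allI impI)
  let ?n = "card (UNIV :: 'v set)"
  let ?k = "kval pref S VS"
  let ?W = "willing pref S VS ?k"
  fix D assume D: "D \<subseteq> - R_step pref S VS" "D \<noteq> {}"
  have kp: "?k \<in> {1..card VS}" "card ?W \<ge> ?k" using kval_props[OF k] by auto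
  have WVS: "?W \<subseteq> VS" unfolding willing_def by auto
  have cVS': "card (R_step pref S VS) = card VS - card ?W" unfolding R_step_def using WVS
    by (simp add: card_Diff_subset)
  have cWle: "card ?W \<le> card VS" using WVS by (simp add: card_mono)
  have cVS: "card VS \<le> ?n" by (simp add: card_mono)
  show "\<exists>v\<in>D. \<exists>a0 b0. card (R_step pref S VS) + card D \<le> a0 \<and>
      b0 \<le> ?n - card (R_step pref S VS) \<and> ((other S, b0), (S, a0)) \<in> pref v"
  proof (cases "D - VS = {}")
    case True
    hence DW: "D \<subseteq> ?W" using D(1) unfolding R_step_def by auto
    then obtain v where v: "v \<in> D" "v \<in> ?W" using D(2) by auto
    have "card D \<le> card ?W" using DW by (simp add: card_mono)
    moreover have "((other S, ?n - card VS + ?k), (S, card VS)) \<in> pref v" using v unfolding willing_def by simp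
    ultimately show ?thesis using v(1) cVS' kp cWle cVS
      by (intro bexI[of _ v] exI[of _ "card VS"] exI[of _ "?n - card VS + ?k"]) auto
  next
    case False
    from I[unfolded Inv_def, rule_format, of "D - VS"] False
    obtain v a0 b0 where v: "v \<in> D - VS" "card VS + card (D - VS) \<le> a0"
      "b0 \<le> ?n - card VS" "((other S, b0), (S, a0)) \<in> pref v" by auto
    have "D \<inter> VS \<subseteq> ?W" using D(1) unfolding R_step_def by auto
    hence "card (D \<inter> VS) \<le> card ?W" by (simp add: card_mono)
    moreover have "card D = card (D - VS) + card (D \<inter> VS)"
      by (metis Int_commute card_Diff_subset_Int card_Int_Diff finite add.commute)
    ultimately show ?thesis using v cVS' cWle cVS
      by (intro bexI[of _ v] exI[of _ a0] exI[of _ b0]) auto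
  qed
qed

lemma R_alg_stable: "stable pref (R_alg pref S)"
proof -
  let ?n = "card (UNIV :: 'v set)"
  let ?F = "R_final pref S"
  let ?f = "R_alg pref S"
  have "Inv S UNIV" unfolding Inv_def by auto
  hence FP: "Inv S ?F" "kval pref S ?F = 0"
    using R_final_prop[where P = "Inv S"] Inv_step by blast+
  have cF: "card ?F \<le> ?n" by (simp add: card_mono)
  show ?thesis unfolding stable_def
  proof
    assume "\<exists>f'. f' \<noteq> ?f \<and> (\<forall>v. f' v \<noteq> ?f v \<longrightarrow> prefers pref v f' ?f)"
    then obtain f' where f': "f' \<noteq> ?f" "\<And>v. f' v \<noteq> ?f v \<Longrightarrow> prefers pref v f' ?f" by blast
    define D where "D = {v. f' v \<noteq> ?f v}"
    let ?DS = "D \<inter> ?F" and ?DO = "D - ?F"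
    have fv: "?f v = (if v \<in> ?F then S else other S)" for v unfolding R_alg_def by simp
    have f'v: "f' v = (if v \<in> D then other (?f v) else ?f v)" for v
      unfolding D_def by auto
    have Dne: "D \<noteq> {}" using f'(1) unfolding D_def by auto
    have cD: "card ?DS \<le> card ?F" "card ?DO \<le> card (- ?F)" by (auto intro: card_mono)
    show False
    proof (cases "card ?DO \<le> card ?DS")
      case True
      have DSne: "?DS \<noteq> {}" using True Dne
        by (metis Diff_disjoint Int_Diff_Un card_0_eq finite le_zero_eq sup_bot.right_neutral)
      have "?DS \<subseteq> willing pref S ?F (card ?DS)"
      proof
        fix v assume v: "v \<in> ?DS"
        have "{u. f' u = other S} = (- ?F - ?DO) \<union> ?DS" using f'v fv by (auto split: if_splits)
        hence "comm_size f' v = card ((- ?F - ?DO) \<union> ?DS)" using v f'v fv unfolding comm_size_def by simp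
        also have "\<dots> = card (- ?F - ?DO) + card ?DS" by (rule card_Un_disjoint) auto
        also have "\<dots> = ?n - card ?F - card ?DO + card ?DS"
          by (subst card_Diff_subset) (auto simp: card_compl)
        finally have c1: "comm_size f' v = ?n - card ?F - card ?DO + card ?DS" .
        have c2: "comm_size ?f v = card ?F" using v fv unfolding comm_size_def by simp
        have "prefers pref v f' ?f" using v f'(2) unfolding D_def by auto
        hence "((other S, ?n - card ?F - card ?DO + card ?DS), (S, card ?F)) \<in> pref v"
          unfolding prefers_def c1 c2 using v f'v fv by simp
        hence "((other S, ?n - card ?F + card ?DS), (S, card ?F)) \<in> pref v"
          by (rule up_left) (use cD cF in auto)
        thus "v \<in> willing pref S ?F (card ?DS)" using v unfolding willing_def by simp
      qed
      hence "card ?DS \<le> card (willing pref S ?F (card ?DS))" by (simp add: card_mono)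
      moreover have "card ?DS \<in> {1..card ?F}" using DSne cD by (simp add: Suc_leI card_gt_0_iff)
      ultimately have "kval pref S ?F \<noteq> 0" by (rule kval_nz[rotated])
      thus False using FP by simp
    next
      case False
      hence DOne: "?DO \<noteq> {}" by (metis Int_absorb2 card.empty le0 Diff_eq_empty_iff)
      from FP(1)[unfolded Inv_def, rule_format, of ?DO] DOne
      obtain v a0 b0 where v: "v \<in> ?DO" "card ?F + card ?DO \<le> a0"
        "b0 \<le> ?n - card ?F" "((other S, b0), (S, a0)) \<in> pref v" by auto
      have a0n: "a0 \<le> ?n" using pref_out[OF v(4)] by simp
      have "{u. f' u = S} = (?F - ?DS) \<union> ?DO" using f'v fv by (auto split: if_splits)
      hence "comm_size f' v = card ((?F - ?DS) \<union> ?DO)" using v f'v fv unfolding comm_size_def by simp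
      also have "\<dots> = card (?F - ?DS) + card ?DO" by (rule card_Un_disjoint) auto
      also have "\<dots> = card ?F - card ?DS + card ?DO" by (simp add: card_Diff_subset)
      finally have c1: "comm_size f' v = card ?F - card ?DS + card ?DO" .
      have c2: "comm_size ?f v = ?n - card ?F" using v fv unfolding comm_size_def
        by (simp add: card_compl[symmetric] Compl_eq[symmetric])
      have "prefers pref v f' ?f" using v f'(2) unfolding D_def by auto
      hence "((S, card ?F - card ?DS + card ?DO), (other S, ?n - card ?F)) \<in> pref v"
        unfolding prefers_def c1 c2 using v f'v fv by simp
      hence "((S, a0), (other S, ?n - card ?F)) \<in> pref v" by (rule up_left) (use v a0n in auto)
      hence "((other S, b0), (other S, ?n - card ?F)) \<in> pref v" using v(4) pref_trans by blast
      hence "((other S, ?n - card ?F), (other S, ?n - card ?F)) \<in> pref v" by (rule up_left) (use v(3) in auto)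
      thus False using pref_irrefl by blast
    qed
  qed
qed

end

theorem theorem2:
  fixes pref :: "'v::finite profile"
  assumes "is_profile pref"
    and "monotonic pref"
  shows "R_alg pref A = R_alg pref B \<longleftrightarrow> (\<exists>!f. stable pref f)"
proof
  assume eq: "R_alg pref A = R_alg pref B"
  have stA: "stable pref (R_alg pref A)" using R_alg_stable[OF assms] .
  show "\<exists>!f. stable pref f"
  proof (rule ex1I[of "stable pref", OF stA])
    fix g assume g: "stable pref g"
    show "g = R_alg pref A"
    proof
      fix v
      show "g v = R_alg pref A v"
      proof (cases "g v")
        case A
        hence "v \<in> R_final pref A" using stable_sub_final[OF assms g, of A] by auto
        thus ?thesis using A unfolding R_alg_def by simp
      next
        case B
        hence "v \<in> R_final pref B" using stable_sub_final[OF assms g, of B] by auto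
        hence "R_alg pref B v = B" unfolding R_alg_def by simp
        thus ?thesis using B eq by simp
      qed
    qed
  qed
next
  assume "\<exists>!f. stable pref f"
  thus "R_alg pref A = R_alg pref B" using R_alg_stable[OF assms, of A] R_alg_stable[OF assms, of B] by blast
qed

end
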